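(* Let $B$ be a commutative Banach algebra, $(\omega_k)_{k\in\mathbb{N}}$ a growth family, $(M,|\cdot|)$ a graded monoid generated (as a monoid) by a subset $\Sigma\subseteq M$, $k\in\mathbb{N}$, and let $\chi\colon M\to(B,\cdot)$ be a $B$-valued character (monoid homomorphism). Then the following are equivalent: (i) $\chi\in\ell^\infty_k(M,B)$ with $\|\chi\|_{\ell^\infty_k}=1$; (ii) $\chi|_\Sigma\in\ell^\infty_k(\Sigma,B)$ with $\|\chi|_\Sigma\|_{\ell^\infty_k}\le1$.
   Context: A commutative Banach algebra is a commutative associative unital $\mathbb{K}$-algebra ($\mathbb{K}\in\{\mathbb{R},\mathbb{C}\}$) with a complete submultiplicative norm such that $\|1_B\|=1$. A growth family is a family $(\omega_k)_{k\in\mathbb{N}}$ of functions $\omega_k\colon\mathbb{N}_0\to\mathbb{N}$ with (W1) $\omega_k(0)=1$, $\omega_k(n)\le\omega_{k+1}(n)$; (W2) $\omega_k(n)\omega_k(m)\le\omega_k(n+m)$; (W3) for every $k_1$ there is $k_2\ge k_1$ with $\omega_{k_2}(n)\ge 2^n\omega_{k_1}(n)$ for all $n$. A graded monoid is a monoid $M$ together with a monoid homomorphism $|\cdot|\colon M\to(\mathbb{N}_0,+)$; subsets are graded by restriction. For a set $J$ graded by $|\cdot|\colon J\to\mathbb{N}_0$, $\ell^\infty_k(J,B)$ is the space of $f\colon J\to B$ with $\|f\|_{\ell^\infty_k}=\sup_{\tau\in J}\|f(\tau)\|/\omega_k(|\tau|)<\infty$. *)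

theory Defs
  imports "HOL-Analysis.Analysis"
begin

definition growth_family :: "(nat \<Rightarrow> nat \<Rightarrow> nat) \<Rightarrow> bool" where
  "growth_family \<omega> \<longleftrightarrow>
     (\<forall>k. \<omega> k 0 = 1) \<and>
     (\<forall>k n. \<omega> k n \<ge> 1) \<and>
     (\<forall>k n. \<omega> k n \<le> \<omega> (Suc k) n) \<and>
     (\<forall>k n m. \<omega> k n * \<omega> k m \<le> \<omega> k (n + m)) \<and>
     (\<forall>k1. \<exists>k2\<ge>k1. \<forall>n. \<omega> k2 n \<ge> 2 ^ n * \<omega> k1 n)"

definition grading :: "('m::monoid_mult \<Rightarrow> nat) \<Rightarrow> bool" where
  "grading deg \<longleftrightarrow> deg 1 = 0 \<and> (\<forall>x y. deg (x * y) = deg x + deg y)"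

inductive_set submonoid_gen :: "'m::monoid_mult set \<Rightarrow> 'm set" for S where
  one: "1 \<in> submonoid_gen S"
| gen: "s \<in> S \<Longrightarrow> s \<in> submonoid_gen S"
| mult: "a \<in> submonoid_gen S \<Longrightarrow> b \<in> submonoid_gen S \<Longrightarrow> a * b \<in> submonoid_gen S"

definition character :: "('m::monoid_mult \<Rightarrow> 'b::monoid_mult) \<Rightarrow> bool" where
  "character chi \<longleftrightarrow> chi 1 = 1 \<and> (\<forall>x y. chi (x * y) = chi x * chi y)"

definition wquot :: "(nat \<Rightarrow> nat \<Rightarrow> nat) \<Rightarrow> nat \<Rightarrow> ('j \<Rightarrow> nat) \<Rightarrow> ('j \<Rightarrow> 'b::real_normed_vector) \<Rightarrow> 'j \<Rightarrow> real" where
  "wquot \<omega> k deg f \<tau> = norm (f \<tau>) / real (\<omega> k (deg \<tau>))"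

definition in_linf :: "(nat \<Rightarrow> nat \<Rightarrow> nat) \<Rightarrow> nat \<Rightarrow> ('j \<Rightarrow> nat) \<Rightarrow> 'j set \<Rightarrow> ('j \<Rightarrow> 'b::real_normed_vector) \<Rightarrow> bool" where
  "in_linf \<omega> k deg J f \<longleftrightarrow> bdd_above (wquot \<omega> k deg f ` J)"

text \<open>The l^infty_k norm; the supremum over the empty index set is taken to be 0.\<close>
definition linf_norm :: "(nat \<Rightarrow> nat \<Rightarrow> nat) \<Rightarrow> nat \<Rightarrow> ('j \<Rightarrow> nat) \<Rightarrow> 'j set \<Rightarrow> ('j \<Rightarrow> 'b::real_normed_vector) \<Rightarrow> real" where
  "linf_norm \<omega> k deg J f = (if J = {} then 0 else (SUP \<tau>\<in>J. wquot \<omega> k deg f \<tau>))"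

end

theory Submission
  imports Defs
begin

theorem lemma2p5:
  fixes \<omega> :: "nat \<Rightarrow> nat \<Rightarrow> nat"
    and deg :: "'m::monoid_mult \<Rightarrow> nat"
    and \<Sigma> :: "'m set"
    and chi :: "'m \<Rightarrow> 'b::{real_normed_algebra_1, banach, comm_ring_1}"
    and k :: nat
  assumes "growth_family \<omega>"
    and "grading deg"
    and "submonoid_gen \<Sigma> = UNIV"
    and "character chi"
  shows "(in_linf \<omega> k deg UNIV chi \<and> linf_norm \<omega> k deg UNIV chi = 1) \<longleftrightarrow>
         (in_linf \<omega> k deg \<Sigma> chi \<and> linf_norm \<omega> k deg \<Sigma> chi \<le> 1)"
proof -
  have w0: "\<omega> k 0 = 1" and wpos: "\<And>n. \<omega> k n \<ge> 1"
    and wmul: "\<And>n m. \<omega> k n * \<omega> k m \<le> \<omega> k (n + m)"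
    using assms(1) unfolding growth_family_def by auto
  have d1: "deg 1 = 0" and dm: "\<And>x y. deg (x*y) = deg x + deg y"
    using assms(2) unfolding grading_def by auto
  have c1: "chi 1 = 1" and cm: "\<And>x y. chi (x*y) = chi x * chi y"
    using assms(4) unfolding character_def by auto
  have wq_le: "wquot \<omega> k deg chi \<tau> \<le> 1 \<longleftrightarrow> norm (chi \<tau>) \<le> real (\<omega> k (deg \<tau>))" for \<tau>
  proof -
    have "real (\<omega> k (deg \<tau>)) > 0" using wpos[of "deg \<tau>"] by simp
    thus ?thesis unfolding wquot_def by (simp add: divide_le_eq)
  qed
  have wq1: "wquot \<omega> k deg chi 1 = 1" unfolding wquot_def by (simp add: c1 d1 w0)
  show ?thesis
  proof
    assume H: "in_linf \<omega> k deg UNIV chi \<and> linf_norm \<omega> k deg UNIV chi = 1"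
    hence bdd: "bdd_above (wquot \<omega> k deg chi ` UNIV)" unfolding in_linf_def by auto
    have le: "wquot \<omega> k deg chi \<tau> \<le> 1" for \<tau>
    proof -
      have "wquot \<omega> k deg chi \<tau> \<le> (SUP x\<in>UNIV. wquot \<omega> k deg chi x)"
        by (rule cSUP_upper[OF _ bdd]) simp
      thus ?thesis using H unfolding linf_norm_def by simp
    qed
    have b2: "bdd_above (wquot \<omega> k deg chi ` \<Sigma>)"
      using le by (auto intro!: bdd_aboveI[where M=1])
    have "linf_norm \<omega> k deg \<Sigma> chi \<le> 1"
      unfolding linf_norm_def using le by (auto intro!: cSUP_least)
    thus "in_linf \<omega> k deg \<Sigma> chi \<and> linf_norm \<omega> k deg \<Sigma> chi \<le> 1"
      using b2 unfolding in_linf_def by simp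
  next
    assume H: "in_linf \<omega> k deg \<Sigma> chi \<and> linf_norm \<omega> k deg \<Sigma> chi \<le> 1"
    have leS: "norm (chi s) \<le> real (\<omega> k (deg s))" if s: "s \<in> \<Sigma>" for s
    proof -
      have bdd: "bdd_above (wquot \<omega> k deg chi ` \<Sigma>)" using H unfolding in_linf_def by auto
      have "wquot \<omega> k deg chi s \<le> (SUP x\<in>\<Sigma>. wquot \<omega> k deg chi x)"
        using cSUP_upper[OF s bdd] .
      hence "wquot \<omega> k deg chi s \<le> 1" using H s unfolding linf_norm_def by (auto split: if_splits)
      thus ?thesis using wq_le by simp
    qed
    have all: "norm (chi x) \<le> real (\<omega> k (deg x))" if "x \<in> submonoid_gen \<Sigma>" for x
      using that
    proof induction
      case one thus ?case by (simp add: c1 d1 w0)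
    next
      case (gen s) thus ?case by (rule leS)
    next
      case (mult a b)
      have "norm (chi (a*b)) \<le> norm (chi a) * norm (chi b)" by (simp add: cm norm_mult_ineq)
      also have "\<dots> \<le> real (\<omega> k (deg a)) * real (\<omega> k (deg b))"
        using mult.IH by (intro mult_mono) auto
      also have "\<dots> \<le> real (\<omega> k (deg (a*b)))"
        using wmul[of "deg a" "deg b"] by (simp add: dm flip: of_nat_mult)
      finally show ?case .
    qed
    have le: "wquot \<omega> k deg chi \<tau> \<le> 1" for \<tau>
      using all[of \<tau>] assms(3) wq_le by auto
    have b: "bdd_above (wquot \<omega> k deg chi ` UNIV)"
      using le by (auto intro!: bdd_aboveI[where M=1])
    have "(SUP x\<in>UNIV. wquot \<omega> k deg chi x) = 1"
    proof (rule antisym)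
      show "(SUP x\<in>UNIV. wquot \<omega> k deg chi x) \<le> 1" using le by (auto intro!: cSUP_least)
      show "1 \<le> (SUP x\<in>UNIV. wquot \<omega> k deg chi x)"
        using cSUP_upper[OF _ b, of 1] wq1 by simp
    qed
    thus "in_linf \<omega> k deg UNIV chi \<and> linf_norm \<omega> k deg UNIV chi = 1"
      using b unfolding in_linf_def linf_norm_def by simp
  qed
qed

end
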